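(* Let $\nu$ be a Borel probability measure on $\mathbb{R}$ with support $\Omega\subseteq[0,1]$, and suppose $\nu$ is an R-spectral measure with an R-spectrum $\Gamma$ such that $q\Gamma\subseteq\mathbb{Z}$ for some integer $q\ge1$. Let $\mathcal{C}$ be a finite set of nonnegative integers, $P=\{p_c\}_{c\in\mathcal{C}}$ with $p_c>0$, $\sum_cp_c=1$, and let $\eta_q=\sum_{c\in\mathcal{C}}p_c\delta_{qc}$. Then $\mu:=\eta_q*\nu$ is an R-spectral measure.
   Context: A probability measure $\rho$ on $\mathbb{R}$ is an R-spectral measure with R-spectrum $\Lambda$ if $\{e^{2\pi i\lambda x}:\lambda\in\Lambda\}$ is a Riesz basis of $L^2(\rho)$ (a basis that is also a frame: there exist $A,B>0$ with $A\|f\|^2\le\sum_\lambda|\int fe^{-2\pi i\lambda x}d\rho|^2\le B\|f\|^2$ for all $f$). $*$ denotes convolution of measures. *)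

theory Defs
  imports "HOL-Probability.Probability"
begin

definition msupport :: "real measure \<Rightarrow> real set" where
  "msupport M = {x. \<forall>e>0. emeasure M (ball x e) > 0}"

definition expo :: "real \<Rightarrow> real \<Rightarrow> complex" where
  "expo l x = exp (2 * pi * \<i> * complex_of_real (l * x))"

definition L2 :: "real measure \<Rightarrow> (real \<Rightarrow> complex) \<Rightarrow> bool" where
  "L2 \<rho> f \<longleftrightarrow> f \<in> borel_measurable \<rho> \<and> integrable \<rho> (\<lambda>x. (cmod (f x))\<^sup>2)"

definition L2norm2 :: "real measure \<Rightarrow> (real \<Rightarrow> complex) \<Rightarrow> real" where
  "L2norm2 \<rho> f = (\<integral>x. (cmod (f x))\<^sup>2 \<partial>\<rho>)"

definition fcoeff :: "real measure \<Rightarrow> (real \<Rightarrow> complex) \<Rightarrow> real \<Rightarrow> complex" where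
  "fcoeff \<rho> f l = (\<integral>x. f x * cnj (expo l x) \<partial>\<rho>)"

definition exp_frame :: "real measure \<Rightarrow> real set \<Rightarrow> bool" where
  "exp_frame \<rho> \<Lambda> \<longleftrightarrow> (\<exists>A B. A > 0 \<and> B > 0 \<and> (\<forall>f. L2 \<rho> f \<longrightarrow>
      (\<lambda>l. (cmod (fcoeff \<rho> f l))\<^sup>2) summable_on \<Lambda> \<and>
      A * L2norm2 \<rho> f \<le> (\<Sum>\<^sub>\<infinity>l\<in>\<Lambda>. (cmod (fcoeff \<rho> f l))\<^sup>2) \<and>
      (\<Sum>\<^sub>\<infinity>l\<in>\<Lambda>. (cmod (fcoeff \<rho> f l))\<^sup>2) \<le> B * L2norm2 \<rho> f))"

text \<open>The series sum over Lambda of c(l) e_l converges (unconditionally, i.e. along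
  the net of finite subsets of Lambda) to f in L^2(rho).\<close>
definition exp_series_conv :: "real measure \<Rightarrow> real set \<Rightarrow> (real \<Rightarrow> complex) \<Rightarrow> (real \<Rightarrow> complex) \<Rightarrow> bool" where
  "exp_series_conv \<rho> \<Lambda> c f \<longleftrightarrow> (\<forall>e>0. \<exists>F0. finite F0 \<and> F0 \<subseteq> \<Lambda> \<and>
      (\<forall>F. finite F \<and> F0 \<subseteq> F \<and> F \<subseteq> \<Lambda> \<longrightarrow>
        L2norm2 \<rho> (\<lambda>x. f x - (\<Sum>l\<in>F. c l * expo l x)) < e))"

definition exp_basis :: "real measure \<Rightarrow> real set \<Rightarrow> bool" where
  "exp_basis \<rho> \<Lambda> \<longleftrightarrow> (\<forall>f. L2 \<rho> f \<longrightarrow>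
      (\<exists>c. exp_series_conv \<rho> \<Lambda> c f) \<and>
      (\<forall>c c'. exp_series_conv \<rho> \<Lambda> c f \<longrightarrow> exp_series_conv \<rho> \<Lambda> c' f \<longrightarrow>
          (\<forall>l\<in>\<Lambda>. c l = c' l)))"

text \<open>rho is R-spectral with R-spectrum Lambda: the exponentials form a Riesz basis
  (a basis that is also a frame) of L^2(rho).\<close>
definition R_spectrum :: "real measure \<Rightarrow> real set \<Rightarrow> bool" where
  "R_spectrum \<rho> \<Lambda> \<longleftrightarrow> exp_basis \<rho> \<Lambda> \<and> exp_frame \<rho> \<Lambda>"

definition R_spectral :: "real measure \<Rightarrow> bool" where
  "R_spectral \<rho> \<longleftrightarrow> (\<exists>\<Lambda>. R_spectrum \<rho> \<Lambda>)"

definition eta :: "nat set \<Rightarrow> (nat \<Rightarrow> real) \<Rightarrow> nat \<Rightarrow> real measure" where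
  "eta C p q = measure_of UNIV (sets borel)
     (\<lambda>A. \<Sum>c\<in>C. ennreal (p c) * indicator A (real q * real c))"

end

theory Submission
  imports Defs "HOL-Computational_Algebra.Polynomial"
begin



lemma poly_sum_lt:
  fixes p :: "'a::comm_semiring_1 poly"
  assumes "degree p < m"
  shows "poly p x = (\<Sum>j<m. coeff p j * x ^ j)"
proof -
  have "poly p x = (\<Sum>j\<le>degree p. coeff p j * x ^ j)" by (rule poly_altdef)
  also have "\<dots> = (\<Sum>j<m. coeff p j * x ^ j)"
    using assms by (intro sum.mono_neutral_left) (auto simp: coeff_eq_0)
  finally show ?thesis .
qed

lemma vandermonde_inverse:
  fixes C :: "nat set" and z :: "nat \<Rightarrow> complex"
  assumes fin: "finite C" and inj: "inj_on z C"
  obtains V :: "nat \<Rightarrow> nat \<Rightarrow> complex" where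
    "\<And>c d. c \<in> C \<Longrightarrow> d \<in> C \<Longrightarrow> (\<Sum>j<card C. z c ^ j * V j d) = (if c = d then 1 else 0)"
    "\<And>j k. j < card C \<Longrightarrow> k < card C \<Longrightarrow> (\<Sum>c\<in>C. V j c * z c ^ k) = (if j = k then 1 else 0)"
proof -
  define m where "m = card C"
  define L where "L d = smult (inverse (\<Prod>e\<in>C-{d}. (z d - z e))) (\<Prod>e\<in>C-{d}. [:- z e, 1:])" for d
  have degL: "degree (L d) < m" if "d \<in> C" for d
  proof -
    have "degree (L d) \<le> degree (\<Prod>e\<in>C-{d}. [:- z e, 1:])" unfolding L_def by (rule degree_smult_le)
    also have "\<dots> \<le> sum (degree \<circ> (\<lambda>e. [:- z e, 1:])) (C - {d})" using fin by (intro degree_prod_sum_le) auto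
    also have "\<dots> = card (C - {d})" by simp
    also have "\<dots> < m" unfolding m_def using that fin by (metis card_Diff1_less)
    finally show ?thesis .
  qed
  have polyL: "poly (L d) (z c) = (if c = d then 1 else 0)" if "c \<in> C" "d \<in> C" for c d
  proof (cases "c = d")
    case True
    have "(\<Prod>e\<in>C-{d}. (z d - z e)) \<noteq> 0"
      using fin inj that True by (auto simp: inj_on_def)
    then show ?thesis using True by (simp add: L_def poly_prod)
  next
    case False
    have "(\<Prod>e\<in>C-{d}. poly [:- z e, 1:] (z c)) = 0"
      using fin that False by (subst prod_zero_iff) auto
    then show ?thesis using False by (simp add: L_def poly_prod)
  qed
  define V where "V j d = coeff (L d) j" for j d
  show thesis
  proof
    fix c d assume cd: "c \<in> C" "d \<in> C"
    have "(\<Sum>j<card C. z c ^ j * V j d) = poly (L d) (z c)"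
      using poly_sum_lt[OF degL[OF cd(2)], of "z c"] unfolding V_def m_def by (simp add: mult.commute)
    then show "(\<Sum>j<card C. z c ^ j * V j d) = (if c = d then 1 else 0)" using polyL[OF cd] by simp
  next
    fix j k assume jk: "j < card C" "k < card C"
    define P where "P = (\<Sum>c\<in>C. smult (z c ^ k) (L c)) - monom 1 k"
    have degP: "degree P < m"
    proof -
      have "degree (\<Sum>c\<in>C. smult (z c ^ k) (L c)) \<le> m - 1"
        using fin degL by (intro degree_sum_le) (auto intro: order.trans[OF degree_smult_le] dest!: degL)
      moreover have "degree (monom (1::complex) k) \<le> m - 1" using jk unfolding m_def by (simp add: degree_monom_eq)
      moreover have "m > 0" using jk unfolding m_def by simp
      ultimately show ?thesis unfolding P_def using degree_diff_le by (meson diff_less le_less_trans zero_less_one)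
    qed
    have roots: "poly P (z d) = 0" if "d \<in> C" for d
    proof -
      have "poly (\<Sum>c\<in>C. smult (z c ^ k) (L c)) (z d) = (\<Sum>c\<in>C. z c ^ k * (if d = c then 1 else 0))"
        using that by (simp add: poly_sum polyL)
      also have "\<dots> = z d ^ k" using fin that by (simp add: if_distrib cong: if_cong)
      finally show ?thesis by (simp add: P_def poly_monom)
    qed
    have "P = 0"
    proof (rule ccontr)
      assume "P \<noteq> 0"
      hence "card {x. poly P x = 0} \<le> degree P" by (rule card_poly_roots_bound)
      moreover have "z ` C \<subseteq> {x. poly P x = 0}" using roots by auto
      moreover have "finite {x. poly P x = 0}" using \<open>P \<noteq> 0\<close> by (rule poly_roots_finite)
      ultimately have "card (z ` C) \<le> degree P" by (meson card_mono order.trans)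
      with card_image[OF inj] degP show False unfolding m_def by simp
    qed
    hence "coeff P j = 0" by simp
    then have "(\<Sum>c\<in>C. z c ^ k * coeff (L c) j) = coeff (monom 1 k) j"
      by (simp add: P_def coeff_sum coeff_diff)
    then show "(\<Sum>c\<in>C. V j c * z c ^ k) = (if j = k then 1 else 0)"
      unfolding V_def by (simp add: mult.commute coeff_monom)
  qed
qed


definition Dm :: "nat set \<Rightarrow> (nat \<Rightarrow> real) \<Rightarrow> nat measure" where
  "Dm C p = density (count_space C) (\<lambda>c. ennreal (p c))"

lemma emeasure_Dm_distr:
  assumes "finite C" and A: "A \<in> sets borel"
  shows "emeasure (distr (Dm C p) borel (\<lambda>c. real q * real c)) A
       = (\<Sum>c\<in>C. ennreal (p c) * indicator A (real q * real c))"
proof -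
  have m: "(\<lambda>c. real q * real c) \<in> measurable (Dm C p) borel"
    unfolding Dm_def by simp
  have "emeasure (distr (Dm C p) borel (\<lambda>c. real q * real c)) A
      = emeasure (Dm C p) ((\<lambda>c. real q * real c) -` A \<inter> space (Dm C p))"
    using m A by (simp add: emeasure_distr)
  also have "\<dots> = (\<integral>\<^sup>+ c. ennreal (p c) * indicator ((\<lambda>c. real q * real c) -` A \<inter> C) c \<partial>count_space C)"
    unfolding Dm_def by (subst emeasure_density) auto
  also have "\<dots> = (\<Sum>c\<in>C. ennreal (p c) * indicator A (real q * real c))"
    using assms(1) by (subst nn_integral_count_space_finite) (auto intro!: sum.cong split: split_indicator)
  finally show ?thesis .
qed

lemma eta_eq:
  assumes "finite C"
  shows "eta C p q = distr (Dm C p) borel (\<lambda>c. real q * real c)"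
proof -
  let ?M = "distr (Dm C p) borel (\<lambda>c. real q * real c)"
  have "eta C p q = measure_of UNIV (sets borel) (emeasure ?M)"
    unfolding eta_def
  proof (rule measure_of_eq)
    fix a :: "real set" assume "a \<in> sigma_sets UNIV (sets borel)"
    hence "a \<in> sets borel" using sets.sigma_sets_eq[of borel] space_borel by metis
    thus "(\<Sum>c\<in>C. ennreal (p c) * indicator a (real q * real c)) = emeasure ?M a"
      by (simp add: emeasure_Dm_distr[OF assms])
  qed simp
  also have "\<dots> = ?M"
    using measure_of_of_measure[of ?M] by simp
  finally show ?thesis .
qed

lemma finite_measure_Dm:
  assumes "finite C" shows "finite_measure (Dm C p)"
proof
  have "emeasure (Dm C p) (space (Dm C p)) = (\<integral>\<^sup>+ c. ennreal (p c) * indicator C c \<partial>count_space C)"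
    unfolding Dm_def by (subst emeasure_density) auto
  also have "\<dots> = (\<Sum>c\<in>C. ennreal (p c))" using assms
    by (subst nn_integral_count_space_finite) (auto intro!: sum.cong)
  finally show "emeasure (Dm C p) (space (Dm C p)) \<noteq> \<infinity>" using assms by simp
qed

lemma nn_integral_mu:
  assumes "finite C" and sN: "sets \<nu> = sets borel" and fN: "finite_measure \<nu>"
    and g[measurable]: "g \<in> borel_measurable borel"
  shows "(\<integral>\<^sup>+x. g x \<partial>(eta C p q \<star> \<nu>)) = (\<Sum>c\<in>C. ennreal (p c) * (\<integral>\<^sup>+x. g (x + real q * real c) \<partial>\<nu>))"
proof -
  interpret N: finite_measure \<nu> by fact
  note [measurable_cong] = sN
  have fE: "finite_measure (eta C p q)"
    unfolding eta_eq[OF assms(1)]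
    by (intro finite_measure.finite_measure_distr finite_measure_Dm assms(1)) (simp add: Dm_def)
  have sE: "sets (eta C p q) = sets borel" unfolding eta_eq[OF assms(1)] by simp
  have "(\<integral>\<^sup>+x. g x \<partial>(eta C p q \<star> \<nu>)) = (\<integral>\<^sup>+x. \<integral>\<^sup>+y. g (x + y) \<partial>\<nu> \<partial>eta C p q)"
    by (rule nn_integral_convolution[OF fE fN sN sE g])
  also have "\<dots> = (\<integral>\<^sup>+c. \<integral>\<^sup>+y. g (real q * real c + y) \<partial>\<nu> \<partial>Dm C p)"
    unfolding eta_eq[OF assms(1)]
    apply (subst nn_integral_distr)
    apply (simp add: Dm_def)
    apply measurable
    done
  also have "\<dots> = (\<Sum>c\<in>C. ennreal (p c) * (\<integral>\<^sup>+x. g (x + real q * real c) \<partial>\<nu>))"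
    unfolding Dm_def using assms(1)
    by (subst nn_integral_density) (auto simp: nn_integral_count_space_finite add.commute)
  finally show ?thesis .
qed

lemma ennreal_mult_less_top_pos: "0 < a \<Longrightarrow> (ennreal a * x < \<top>) = (x < \<top>)"
  by (cases "x = 0") (auto simp: ennreal_mult_less_top)

locale setting =
  fixes \<nu> :: "real measure" and C :: "nat set" and p :: "nat \<Rightarrow> real" and q :: nat
  assumes sN[measurable_cong]: "sets \<nu> = sets borel" and PN: "prob_space \<nu>"
    and fC: "finite C" and ppos: "\<forall>c\<in>C. p c > 0" and psum: "(\<Sum>c\<in>C. p c) = 1"
    and q1: "q \<ge> 1"
begin

abbreviation "\<mu> \<equiv> eta C p q \<star> \<nu>"

lemma fN: "finite_measure \<nu>" using PN prob_space_def by blast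

lemma sets_mu[simp, measurable_cong]: "sets \<mu> = sets borel" by simp
lemma space_nu[simp]: "space \<nu> = UNIV" using sets_eq_imp_space_eq[OF sN] by simp

lemma nn_mu:
  assumes [measurable]: "g \<in> borel_measurable borel"
  shows "(\<integral>\<^sup>+x. g x \<partial>\<mu>) = (\<Sum>c\<in>C. ennreal (p c) * (\<integral>\<^sup>+x. g (x + real q * real c) \<partial>\<nu>))"
  by (rule nn_integral_mu[OF fC sN fN assms])

lemma shift_meas[measurable]:
  assumes [measurable]: "g \<in> borel_measurable borel"
  shows "(\<lambda>x. g (x + a)) \<in> borel_measurable \<nu>"
  by measurable

lemma integrable_mu_iff:
  fixes g :: "real \<Rightarrow> 'b::{banach, second_countable_topology}"
  assumes [measurable]: "g \<in> borel_measurable borel"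
  shows "integrable \<mu> g \<longleftrightarrow> (\<forall>c\<in>C. integrable \<nu> (\<lambda>x. g (x + real q * real c)))"
proof -
  have "integrable \<mu> g \<longleftrightarrow> (\<integral>\<^sup>+x. norm (g x) \<partial>\<mu>) < \<infinity>"
    by (simp add: integrable_iff_bounded)
  also have "\<dots> \<longleftrightarrow> (\<Sum>c\<in>C. ennreal (p c) * (\<integral>\<^sup>+x. norm (g (x + real q * real c)) \<partial>\<nu>)) < \<infinity>"
    by (subst nn_mu) auto
  also have "\<dots> \<longleftrightarrow> (\<forall>c\<in>C. (\<integral>\<^sup>+x. norm (g (x + real q * real c)) \<partial>\<nu>) < \<infinity>)"
    using fC ppos by (simp add: ennreal_mult_less_top_pos cong: ball_cong)
  also have "\<dots> \<longleftrightarrow> (\<forall>c\<in>C. integrable \<nu> (\<lambda>x. g (x + real q * real c)))"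
    by (simp add: integrable_iff_bounded)
  finally show ?thesis .
qed

lemma enn2real_mu:
  assumes [measurable]: "h \<in> borel_measurable borel"
    and fin: "\<And>c. c \<in> C \<Longrightarrow> (\<integral>\<^sup>+x. ennreal (h (x + real q * real c)) \<partial>\<nu>) < \<infinity>"
  shows "enn2real (\<integral>\<^sup>+x. ennreal (h x) \<partial>\<mu>) = (\<Sum>c\<in>C. p c * enn2real (\<integral>\<^sup>+x. ennreal (h (x + real q * real c)) \<partial>\<nu>))"
proof -
  define r where "r c = enn2real (\<integral>\<^sup>+x. ennreal (h (x + real q * real c)) \<partial>\<nu>)" for c
  have r: "(\<integral>\<^sup>+x. ennreal (h (x + real q * real c)) \<partial>\<nu>) = ennreal (r c)" if "c \<in> C" for c
    using fin[OF that] unfolding r_def by (simp add: less_top)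
  have r0: "r c \<ge> 0" for c unfolding r_def by simp
  have "(\<integral>\<^sup>+x. ennreal (h x) \<partial>\<mu>) = (\<Sum>c\<in>C. ennreal (p c) * ennreal (r c))"
    by (subst nn_mu) (auto simp: r)
  also have "\<dots> = ennreal (\<Sum>c\<in>C. p c * r c)"
    using ppos r0 by (subst sum_ennreal[symmetric]) (auto simp: ennreal_mult intro!: sum.cong)
  finally have e: "(\<integral>\<^sup>+x. ennreal (h x) \<partial>\<mu>) = ennreal (\<Sum>c\<in>C. p c * r c)" .
  have "(\<Sum>c\<in>C. p c * r c) \<ge> 0" using ppos r0 by (auto intro!: sum_nonneg simp: less_imp_le)
  then show ?thesis unfolding e by (simp add: r_def)
qed

lemma integral_mu_real:
  fixes g :: "real \<Rightarrow> real"
  assumes g: "integrable \<mu> g"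
  shows "integral\<^sup>L \<mu> g = (\<Sum>c\<in>C. p c * integral\<^sup>L \<nu> (\<lambda>x. g (x + real q * real c)))"
proof -
  have [measurable]: "g \<in> borel_measurable borel" using g by simp
  have gc: "integrable \<nu> (\<lambda>x. g (x + real q * real c))" if "c \<in> C" for c
    using g that by (simp add: integrable_mu_iff)
  have fin1: "(\<integral>\<^sup>+x. ennreal (g (x + real q * real c)) \<partial>\<nu>) < \<infinity>" if "c \<in> C" for c
  proof -
    have "(\<integral>\<^sup>+x. ennreal (g (x + real q * real c)) \<partial>\<nu>) \<le> (\<integral>\<^sup>+x. norm (g (x + real q * real c)) \<partial>\<nu>)"
      by (intro nn_integral_mono) auto
    also have "\<dots> < \<infinity>" using gc[OF that] by (simp add: integrable_iff_bounded)
    finally show ?thesis .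
  qed
  have fin2: "(\<integral>\<^sup>+x. ennreal (- g (x + real q * real c)) \<partial>\<nu>) < \<infinity>" if "c \<in> C" for c
  proof -
    have "(\<integral>\<^sup>+x. ennreal (- g (x + real q * real c)) \<partial>\<nu>) \<le> (\<integral>\<^sup>+x. norm (g (x + real q * real c)) \<partial>\<nu>)"
      by (intro nn_integral_mono) auto
    also have "\<dots> < \<infinity>" using gc[OF that] by (simp add: integrable_iff_bounded)
    finally show ?thesis .
  qed
  have "integral\<^sup>L \<mu> g = enn2real (\<integral>\<^sup>+x. ennreal (g x) \<partial>\<mu>) - enn2real (\<integral>\<^sup>+x. ennreal (- g x) \<partial>\<mu>)"
    by (rule real_lebesgue_integral_def[OF g])
  also have "\<dots> = (\<Sum>c\<in>C. p c * enn2real (\<integral>\<^sup>+x. ennreal (g (x + real q * real c)) \<partial>\<nu>))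
       - (\<Sum>c\<in>C. p c * enn2real (\<integral>\<^sup>+x. ennreal (- g (x + real q * real c)) \<partial>\<nu>))"
    using enn2real_mu[of g, OF _ fin1] enn2real_mu[of "\<lambda>x. - g x", OF _ fin2] by simp
  also have "\<dots> = (\<Sum>c\<in>C. p c * integral\<^sup>L \<nu> (\<lambda>x. g (x + real q * real c)))"
    by (simp add: sum_subtractf[symmetric] right_diff_distrib real_lebesgue_integral_def[OF gc] cong: sum.cong)
  finally show ?thesis .
qed

lemma integral_mu:
  fixes g :: "real \<Rightarrow> complex"
  assumes g: "integrable \<mu> g"
  shows "integral\<^sup>L \<mu> g = (\<Sum>c\<in>C. p c * integral\<^sup>L \<nu> (\<lambda>x. g (x + real q * real c)))"
proof -
  have [measurable]: "g \<in> borel_measurable borel" using g by simp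
  have gc: "integrable \<nu> (\<lambda>x. g (x + real q * real c))" if "c \<in> C" for c
    using g that by (simp add: integrable_mu_iff)
  show ?thesis
  proof (rule complex_eqI)
    have "Re (integral\<^sup>L \<mu> g) = integral\<^sup>L \<mu> (\<lambda>x. Re (g x))" using g by simp
    also have "\<dots> = (\<Sum>c\<in>C. p c * integral\<^sup>L \<nu> (\<lambda>x. Re (g (x + real q * real c))))"
      using g by (intro integral_mu_real) auto
    also have "\<dots> = Re (\<Sum>c\<in>C. p c * integral\<^sup>L \<nu> (\<lambda>x. g (x + real q * real c)))"
      using gc by (simp add: Re_sum)
    finally show "Re (integral\<^sup>L \<mu> g) = Re (\<Sum>c\<in>C. p c * integral\<^sup>L \<nu> (\<lambda>x. g (x + real q * real c)))" .
    have "Im (integral\<^sup>L \<mu> g) = integral\<^sup>L \<mu> (\<lambda>x. Im (g x))" using g by simp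
    also have "\<dots> = (\<Sum>c\<in>C. p c * integral\<^sup>L \<nu> (\<lambda>x. Im (g (x + real q * real c))))"
      using g by (intro integral_mu_real) auto
    also have "\<dots> = Im (\<Sum>c\<in>C. p c * integral\<^sup>L \<nu> (\<lambda>x. g (x + real q * real c)))"
      using gc by (simp add: Im_sum)
    finally show "Im (integral\<^sup>L \<mu> g) = Im (\<Sum>c\<in>C. p c * integral\<^sup>L \<nu> (\<lambda>x. g (x + real q * real c)))" .
  qed
qed

end




lemma expo_add1: "expo (a + b) x = expo a x * expo b x"
  unfolding expo_def by (simp add: algebra_simps exp_add[symmetric])
lemma expo_add2: "expo l (x + y) = expo l x * expo l y"
  unfolding expo_def by (simp add: algebra_simps exp_add[symmetric])
lemma norm_expo[simp]: "cmod (expo l x) = 1"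
  unfolding expo_def by (simp add: norm_exp_eq_Re)
lemma cnj_expo_mult[simp]: "cnj (expo l x) * expo l x = 1"
  by (metis complex_norm_square norm_expo of_real_1 one_power2 mult.commute)
lemma expo_mult_cnj[simp]: "expo l x * cnj (expo l x) = 1"
  using cnj_expo_mult by (simp add: mult.commute)
lemma norm_cnj_expo[simp]: "cmod (cnj (expo l x)) = 1" by simp
lemma expo_cis: "expo l x = cis (2 * pi * (l * x))"
  unfolding expo_def cis_conv_exp by (simp add: algebra_simps)
lemma expo_int:
  assumes "real q * g \<in> \<int>" shows "expo g (real q * real c) = 1"
proof -
  have "real q * g * real c \<in> \<int>" using assms by (simp add: Ints_mult)
  hence "cis (2 * pi * (real q * g * real c)) = 1" by (rule cis_multiple_2pi)
  thus ?thesis unfolding expo_cis by (simp add: algebra_simps)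
qed
lemma expo_pow:
  assumes "q > 0" "N > 0"
  shows "expo (real j / (real q * real N)) (real q * real c) = (expo (1 / real N) (real c)) ^ j"
proof -
  have "expo (real j / (real q * real N)) (real q * real c) = exp (of_nat j * (2 * pi * \<i> * complex_of_real (1 / real N * real c)))"
    unfolding expo_def using assms by (simp add: field_simps)
  also have "\<dots> = (expo (1 / real N) (real c)) ^ j" unfolding expo_def by (rule exp_of_nat_mult)
  finally show ?thesis .
qed
lemma expo_inj:
  assumes "c < N" "d < N" "expo (1 / real N) (real c) = expo (1 / real N) (real d)"
  shows "c = d"
proof -
  define a where "a = 2 * pi * (real c / real N)"
  define b where "b = 2 * pi * (real d / real N)"
  have "exp (\<i> * complex_of_real a) = exp (\<i> * complex_of_real b)"
    using assms(3) unfolding expo_def a_def b_def by (simp add: algebra_simps)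
  then obtain n :: int where n: "\<i> * complex_of_real a = \<i> * complex_of_real b + (of_int (2 * n) * pi) * \<i>"
    unfolding exp_eq by blast
  have "Im (\<i> * complex_of_real a) = Im (\<i> * complex_of_real b + (of_int (2 * n) * pi) * \<i>)"
    using n by simp
  hence "a = b + 2 * pi * of_int n" by simp
  hence "2 * pi * (real c / real N) = 2 * pi * (real d / real N + of_int n)" unfolding a_def b_def by (simp add: algebra_simps)
  hence "real c / real N = real d / real N + of_int n"
    by (metis mult_cancel_left mult_eq_0_iff pi_neq_zero zero_neq_numeral)
  moreover have "N > 0" using assms by simp
  ultimately have e: "real c = real d + of_int n * real N" by (simp add: field_simps)
  have "n = 0"
  proof (rule ccontr)
    assume "n \<noteq> 0"
    hence "1 \<le> \<bar>real_of_int n\<bar>" by linarith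
    hence "1 * real N \<le> \<bar>real_of_int n\<bar> * real N" by (intro mult_right_mono) auto
    hence "\<bar>of_int n * real N\<bar> \<ge> real N" by (simp add: abs_mult)
    thus False using e assms by auto
  qed
  thus ?thesis using e by simp
qed
lemma expo_meas[measurable]: "expo l \<in> borel_measurable borel"
  unfolding expo_def by (intro borel_measurable_continuous_onI continuous_intros)

lemma L2_meas: "L2 M f \<Longrightarrow> f \<in> borel_measurable M" unfolding L2_def by simp
lemma L2_int: "L2 M f \<Longrightarrow> integrable M (\<lambda>x. (cmod (f x))\<^sup>2)" unfolding L2_def by simp

lemma L2_add:
  assumes "L2 M f" "L2 M g" shows "L2 M (\<lambda>x. f x + g x)"
  unfolding L2_def
proof
  have [measurable]: "f \<in> borel_measurable M" "g \<in> borel_measurable M" using assms by (auto simp: L2_def)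
  show "(\<lambda>x. f x + g x) \<in> borel_measurable M" using assms by (auto simp: L2_def intro: borel_measurable_add)
  show "integrable M (\<lambda>x. (cmod (f x + g x))\<^sup>2)"
  proof (rule Bochner_Integration.integrable_bound)
    show "integrable M (\<lambda>x. 2 * (cmod (f x))\<^sup>2 + 2 * (cmod (g x))\<^sup>2)" using assms by (simp add: L2_def)
    show "(\<lambda>x. (cmod (f x + g x))\<^sup>2) \<in> borel_measurable M" by measurable
    show "AE x in M. norm ((cmod (f x + g x))\<^sup>2) \<le> norm (2 * (cmod (f x))\<^sup>2 + 2 * (cmod (g x))\<^sup>2)"
    proof (rule AE_I2)
      fix x
      have "cmod (f x + g x) \<le> cmod (f x) + cmod (g x)" by (rule norm_triangle_ineq)
      hence "(cmod (f x + g x))\<^sup>2 \<le> (cmod (f x) + cmod (g x))\<^sup>2" by (simp add: power_mono)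
      also have "\<dots> \<le> 2 * (cmod (f x))\<^sup>2 + 2 * (cmod (g x))\<^sup>2"
        using zero_le_power2[of "cmod (f x) - cmod (g x)"] unfolding power2_sum power2_diff by linarith
      finally show "norm ((cmod (f x + g x))\<^sup>2) \<le> norm (2 * (cmod (f x))\<^sup>2 + 2 * (cmod (g x))\<^sup>2)" by simp
    qed
  qed
qed

lemma L2_mult:
  assumes "L2 M f" "b \<in> borel_measurable M" "\<And>x. cmod (b x) \<le> K"
  shows "L2 M (\<lambda>x. b x * f x)"
  unfolding L2_def
proof
  have [measurable]: "f \<in> borel_measurable M" "b \<in> borel_measurable M" using assms by (auto simp: L2_def)
  show "(\<lambda>x. b x * f x) \<in> borel_measurable M" using assms by (auto simp: L2_def intro: borel_measurable_times)
  show "integrable M (\<lambda>x. (cmod (b x * f x))\<^sup>2)"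
  proof (rule Bochner_Integration.integrable_bound)
    show "integrable M (\<lambda>x. K\<^sup>2 * (cmod (f x))\<^sup>2)" using assms by (simp add: L2_def)
    show "(\<lambda>x. (cmod (b x * f x))\<^sup>2) \<in> borel_measurable M" by measurable
    show "AE x in M. norm ((cmod (b x * f x))\<^sup>2) \<le> norm (K\<^sup>2 * (cmod (f x))\<^sup>2)"
    proof (rule AE_I2)
      fix x
      have "cmod (b x) ^ 2 \<le> K ^ 2" using assms(3)[of x] by (simp add: power_mono)
      hence "(cmod (b x * f x))\<^sup>2 \<le> K\<^sup>2 * (cmod (f x))\<^sup>2"
        by (simp add: norm_mult power_mult_distrib mult_right_mono)
      thus "norm ((cmod (b x * f x))\<^sup>2) \<le> norm (K\<^sup>2 * (cmod (f x))\<^sup>2)" by simp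
    qed
  qed
qed

lemma L2_sum:
  assumes "finite S" "\<And>i. i \<in> S \<Longrightarrow> L2 M (f i)"
  shows "L2 M (\<lambda>x. \<Sum>i\<in>S. f i x)"
  using assms
proof (induction S rule: finite_induct)
  case empty
  then show ?case by (simp add: L2_def)
next
  case (insert a F)
  then show ?case by (simp add: L2_add)
qed

lemma L2_const:
  assumes "finite_measure M" shows "L2 M (\<lambda>x. 1)"
  using assms unfolding L2_def by (simp add: finite_measure.integrable_const)

lemma L2_integrable:
  assumes "finite_measure M" "L2 M f" "b \<in> borel_measurable M" "\<And>x. cmod (b x) \<le> 1"
  shows "integrable M (\<lambda>x. f x * b x)"
proof (rule Bochner_Integration.integrable_bound)
  show "integrable M (\<lambda>x. 1 + (cmod (f x))\<^sup>2)"
    using assms by (simp add: L2_def finite_measure.integrable_const)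
  show "(\<lambda>x. f x * b x) \<in> borel_measurable M" using assms by (auto simp: L2_def intro: borel_measurable_times)
  show "AE x in M. norm (f x * b x) \<le> norm (1 + (cmod (f x))\<^sup>2)"
  proof (rule AE_I2)
    fix x
    have "cmod (f x * b x) \<le> cmod (f x)" using assms(4)[of x]
      by (simp add: norm_mult mult_left_le)
    also have "\<dots> \<le> 1 + (cmod (f x))\<^sup>2"
    proof -
      have "0 \<le> (cmod (f x) - 1) * (cmod (f x) - 1)" by simp
      moreover have "0 \<le> cmod (f x) * cmod (f x)" by simp
      ultimately have "2 * cmod (f x) \<le> 1 + cmod (f x) * cmod (f x)" by (simp add: algebra_simps)
      thus ?thesis using norm_ge_zero[of "f x"] unfolding power2_eq_square by linarith
    qed
    finally show "norm (f x * b x) \<le> norm (1 + (cmod (f x))\<^sup>2)" by simp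
  qed
qed

lemma L2norm2_nonneg: "L2norm2 M f \<ge> 0" unfolding L2norm2_def by simp




lemma has_sum_finite_UN:
  fixes F :: "'a \<Rightarrow> real"
  assumes "finite K" "\<And>k. k \<in> K \<Longrightarrow> (F has_sum s k) (A k)"
    "\<And>k k'. k \<in> K \<Longrightarrow> k' \<in> K \<Longrightarrow> k \<noteq> k' \<Longrightarrow> A k \<inter> A k' = {}"
  shows "(F has_sum (\<Sum>k\<in>K. s k)) (\<Union>k\<in>K. A k)"
  using assms
proof (induction K rule: finite_induct)
  case empty
  then show ?case by simp
next
  case (insert a K)
  have "(F has_sum (s a + (\<Sum>k\<in>K. s k))) (A a \<union> (\<Union>k\<in>K. A k))"
    using insert by (intro has_sum_Un_disjoint) auto
  then show ?case using insert by simp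
qed

locale setting2 = setting +
  fixes \<Gamma> :: "real set"
  assumes RS: "R_spectrum \<nu> \<Gamma>" and qG: "\<forall>\<gamma>\<in>\<Gamma>. real q * \<gamma> \<in> \<int>"
begin

definition "NN = Suc (Max C)"
definition "m = card C"
definition "t j = real j / (real q * real NN)"
definition "z c = expo (1 / real NN) (real c)"
definition "W c j = z c ^ j"

lemma C_lt_N: "c \<in> C \<Longrightarrow> c < NN"
  unfolding NN_def using fC by (simp add: le_imp_less_Suc)
lemma NN_pos: "NN > 0" unfolding NN_def by simp
lemma q_pos: "q > 0" using q1 by simp
lemma m_le_N: "m \<le> NN"
proof -
  have "C \<subseteq> {..<NN}" using C_lt_N by auto
  thus ?thesis unfolding m_def by (metis card_lessThan card_mono finite_lessThan)
qed
lemma C_ne: "C \<noteq> {}" using psum by auto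
lemma m_pos: "m > 0" unfolding m_def using fC C_ne by (simp add: card_gt_0_iff)
lemma inj_z: "inj_on z C"
  unfolding inj_on_def z_def using C_lt_N expo_inj by blast

lemma V_ex: "\<exists>V. (\<forall>c\<in>C. \<forall>d\<in>C. (\<Sum>j<m. z c ^ j * V j d) = (if c = d then 1 else 0)) \<and>
   (\<forall>j<m. \<forall>k<m. (\<Sum>c\<in>C. V j c * z c ^ k) = (if j = k then 1 else 0))"
  unfolding m_def by (rule vandermonde_inverse[OF fC inj_z]) blast

definition "V = (SOME V. (\<forall>c\<in>C. \<forall>d\<in>C. (\<Sum>j<m. z c ^ j * V j d) = (if c = d then 1 else 0)) \<and>
   (\<forall>j<m. \<forall>k<m. (\<Sum>c\<in>C. V j c * z c ^ k) = (if j = k then 1 else 0)))"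

lemma V1: "c \<in> C \<Longrightarrow> d \<in> C \<Longrightarrow> (\<Sum>j<m. W c j * V j d) = (if c = d then 1 else 0)"
  using someI_ex[OF V_ex] unfolding V_def[symmetric] W_def by blast
lemma V2: "j < m \<Longrightarrow> k < m \<Longrightarrow> (\<Sum>c\<in>C. V j c * W c k) = (if j = k then 1 else 0)"
  using someI_ex[OF V_ex] unfolding V_def[symmetric] W_def by blast

lemma norm_W[simp]: "cmod (W c j) = 1" unfolding W_def z_def by (simp add: norm_power)

lemma shift_expo:
  assumes "\<gamma> \<in> \<Gamma>"
  shows "expo (\<gamma> + t j) (x + real q * real c) = expo \<gamma> x * expo (t j) x * W c j"
proof -
  have "expo (\<gamma> + t j) (x + real q * real c) = expo \<gamma> x * expo \<gamma> (real q * real c) * (expo (t j) x * expo (t j) (real q * real c))"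
    by (simp add: expo_add1 expo_add2)
  also have "expo \<gamma> (real q * real c) = 1" using qG assms by (simp add: expo_int)
  also have "expo (t j) (real q * real c) = W c j"
    unfolding t_def W_def z_def using expo_pow[OF q_pos NN_pos] by simp
  finally show ?thesis by simp
qed

lemma uniq:
  assumes "\<gamma> \<in> \<Gamma>" "\<gamma>' \<in> \<Gamma>" "j < m" "j' < m" "\<gamma> + t j = \<gamma>' + t j'"
  shows "\<gamma> = \<gamma>' \<and> j = j'"
proof -
  obtain a where a: "real q * \<gamma> = of_int a" using qG assms(1) Ints_cases by metis
  obtain b where b: "real q * \<gamma>' = of_int b" using qG assms(2) Ints_cases by metis
  have "real q * (\<gamma> + t j) = real q * (\<gamma>' + t j')" using assms(5) by simp
  hence "of_int a + real j / real NN = of_int b + real j' / real NN"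
    using a b q_pos unfolding t_def by (simp add: algebra_simps)
  hence e: "real j - real j' = (of_int b - of_int a) * real NN"
    using NN_pos by (simp add: field_simps)
  have "b = a"
  proof (rule ccontr)
    assume "b \<noteq> a"
    hence "1 \<le> \<bar>real_of_int b - of_int a\<bar>" by linarith
    hence "1 * real NN \<le> \<bar>real_of_int b - of_int a\<bar> * real NN" by (intro mult_right_mono) auto
    hence "real NN \<le> \<bar>real j - real j'\<bar>" unfolding e by (simp add: abs_mult)
    thus False using assms(3,4) m_le_N by linarith
  qed
  hence "j = j'" using e by simp
  thus ?thesis using assms(5) by simp
qed

definition "Lam = (\<lambda>(j, \<gamma>). \<gamma> + t j) ` ({..<m} \<times> \<Gamma>)"
definition "slice G j = {\<gamma>\<in>\<Gamma>. \<gamma> + t j \<in> G}"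

lemma inj_psi: "inj_on (\<lambda>(j, \<gamma>). \<gamma> + t j) ({..<m} \<times> \<Gamma>)"
  unfolding inj_on_def using uniq by auto

lemma Lam_mem: "j < m \<Longrightarrow> \<gamma> \<in> \<Gamma> \<Longrightarrow> \<gamma> + t j \<in> Lam"
  unfolding Lam_def by force

lemma finite_slice: "finite G \<Longrightarrow> finite (slice G j)"
proof -
  assume "finite G"
  have "slice G j \<subseteq> (\<lambda>\<gamma>. \<gamma> + t j) -` G" unfolding slice_def by auto
  moreover have "finite ((\<lambda>\<gamma>. \<gamma> + t j) -` G)"
    using \<open>finite G\<close> by (intro finite_vimageI) (auto simp: inj_on_def)
  ultimately show ?thesis by (rule finite_subset)
qed

lemma sum_slices:
  assumes "finite G" "G \<subseteq> Lam"
  shows "(\<Sum>l\<in>G. F l) = (\<Sum>j<m. \<Sum>\<gamma>\<in>slice G j. F (\<gamma> + t j))"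
proof -
  have G: "G = (\<lambda>(j, \<gamma>). \<gamma> + t j) ` (SIGMA j:{..<m}. slice G j)"
    using assms(2) unfolding Lam_def slice_def by auto
  have inj: "inj_on (\<lambda>(j, \<gamma>). \<gamma> + t j) (SIGMA j:{..<m}. slice G j)"
    by (rule inj_on_subset[OF inj_psi]) (auto simp: slice_def)
  have "(\<Sum>l\<in>G. F l) = (\<Sum>(j, \<gamma>)\<in>(SIGMA j:{..<m}. slice G j). F (\<gamma> + t j))"
    by (subst G, subst sum.reindex[OF inj]) (simp add: case_prod_unfold)
  also have "\<dots> = (\<Sum>j<m. \<Sum>\<gamma>\<in>slice G j. F (\<gamma> + t j))"
    using finite_slice[OF assms(1)] by (subst sum.Sigma) auto
  finally show ?thesis .
qed

lemma has_sum_Lam: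
  fixes F :: "real \<Rightarrow> real"
  assumes "\<And>j. j < m \<Longrightarrow> ((\<lambda>\<gamma>. F (\<gamma> + t j)) has_sum s j) \<Gamma>"
  shows "(F has_sum (\<Sum>j<m. s j)) Lam"
proof -
  have L: "Lam = (\<Union>j\<in>{..<m}. (\<lambda>\<gamma>. \<gamma> + t j) ` \<Gamma>)" unfolding Lam_def by auto
  show ?thesis unfolding L
  proof (rule has_sum_finite_UN)
    fix j assume "j \<in> {..<m}"
    then show "(F has_sum s j) ((\<lambda>\<gamma>. \<gamma> + t j) ` \<Gamma>)"
      using assms by (subst has_sum_reindex) (auto simp: inj_on_def comp_def)
  next
    fix j j' assume "j \<in> {..<m}" "j' \<in> {..<m}" "j \<noteq> j'"
    then show "(\<lambda>\<gamma>. \<gamma> + t j) ` \<Gamma> \<inter> (\<lambda>\<gamma>. \<gamma> + t j') ` \<Gamma> = {}" using uniq by fastforce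
  qed simp
qed

end



lemma cs_bound:
  fixes a b :: "'i \<Rightarrow> complex"
  shows "(cmod (\<Sum>i\<in>S. a i * b i))\<^sup>2 \<le> (\<Sum>i\<in>S. (cmod (a i))\<^sup>2) * (\<Sum>i\<in>S. (cmod (b i))\<^sup>2)"
proof -
  have "cmod (\<Sum>i\<in>S. a i * b i) \<le> (\<Sum>i\<in>S. cmod (a i) * cmod (b i))"
    by (metis (no_types, lifting) norm_mult norm_sum sum.cong)
  hence "(cmod (\<Sum>i\<in>S. a i * b i))\<^sup>2 \<le> (\<Sum>i\<in>S. cmod (a i) * cmod (b i))\<^sup>2"
    by (simp add: power_mono)
  also have "\<dots> \<le> (\<Sum>i\<in>S. (cmod (a i))\<^sup>2) * (\<Sum>i\<in>S. (cmod (b i))\<^sup>2)"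
    by (rule Cauchy_Schwarz_ineq_sum)
  finally show ?thesis .
qed

lemma cs_bound1:
  fixes b :: "'i \<Rightarrow> complex"
  assumes "\<And>i. i \<in> S \<Longrightarrow> cmod (a i) \<le> 1"
  shows "(cmod (\<Sum>i\<in>S. a i * b i))\<^sup>2 \<le> real (card S) * (\<Sum>i\<in>S. (cmod (b i))\<^sup>2)"
proof -
  have "(cmod (\<Sum>i\<in>S. a i * b i))\<^sup>2 \<le> (\<Sum>i\<in>S. (cmod (a i))\<^sup>2) * (\<Sum>i\<in>S. (cmod (b i))\<^sup>2)"
    by (rule cs_bound)
  also have "\<dots> \<le> (\<Sum>i\<in>S. 1) * (\<Sum>i\<in>S. (cmod (b i))\<^sup>2)"
    using assms by (intro mult_right_mono sum_mono sum_nonneg) (auto simp: power_le_one)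
  finally show ?thesis by simp
qed

context setting2
begin

definition "pmin = Min (p ` C)"
lemma pmin_pos: "pmin > 0" unfolding pmin_def using fC C_ne ppos by auto
lemma pmin_le: "c \<in> C \<Longrightarrow> pmin \<le> p c" unfolding pmin_def using fC by auto
lemma p_le1: "c \<in> C \<Longrightarrow> p c \<le> 1"
  using member_le_sum[of c C p] fC ppos psum by (auto simp: less_imp_le)

definition "KV2 = (\<Sum>d\<in>C. \<Sum>j<m. (cmod (V j d))\<^sup>2)"
lemma KV2_nonneg: "KV2 \<ge> 0" unfolding KV2_def by (intro sum_nonneg) auto
lemma KV2_ge: "d \<in> C \<Longrightarrow> (\<Sum>j<m. (cmod (V j d))\<^sup>2) \<le> KV2"
  unfolding KV2_def using fC by (intro member_le_sum) (auto intro: sum_nonneg)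
lemma KV2_ge': "j < m \<Longrightarrow> (\<Sum>c\<in>C. (cmod (V j c))\<^sup>2) \<le> KV2"
proof -
  assume j: "j < m"
  have "(\<Sum>c\<in>C. (cmod (V j c))\<^sup>2) \<le> (\<Sum>c\<in>C. \<Sum>j'<m. (cmod (V j' c))\<^sup>2)"
    using j by (intro sum_mono member_le_sum) auto
  thus ?thesis unfolding KV2_def .
qed

lemma weighted: "(\<Sum>c\<in>C. (cmod (v c))\<^sup>2) \<le> (1 / pmin) * (\<Sum>c\<in>C. p c * (cmod (v c))\<^sup>2)"
proof -
  have "(\<Sum>c\<in>C. (cmod (v c))\<^sup>2) \<le> (\<Sum>c\<in>C. (1 / pmin) * (p c * (cmod (v c))\<^sup>2))"
  proof (rule sum_mono)
    fix c assume c: "c \<in> C"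
    have "pmin * (cmod (v c))\<^sup>2 \<le> p c * (cmod (v c))\<^sup>2" using pmin_le[OF c] by (simp add: mult_right_mono)
    thus "(cmod (v c))\<^sup>2 \<le> (1 / pmin) * (p c * (cmod (v c))\<^sup>2)" using pmin_pos by (simp add: field_simps)
  qed
  thus ?thesis by (simp add: sum_distrib_left)
qed

lemma pw_upper:
  fixes fv :: "nat \<Rightarrow> complex" and e :: "nat \<Rightarrow> complex"
  assumes "\<And>j. cmod (e j) = 1"
  shows "(\<Sum>j<m. (cmod (e j * (\<Sum>c\<in>C. (p c * cnj (W c j)) * fv c)))\<^sup>2)
     \<le> (real m * real m / pmin) * (\<Sum>c\<in>C. p c * (cmod (fv c))\<^sup>2)"
proof -
  have "(\<Sum>j<m. (cmod (e j * (\<Sum>c\<in>C. (p c * cnj (W c j)) * fv c)))\<^sup>2)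
      \<le> (\<Sum>j<m. real m * (\<Sum>c\<in>C. (cmod (fv c))\<^sup>2))"
  proof (rule sum_mono)
    fix j
    have "(cmod (e j * (\<Sum>c\<in>C. (p c * cnj (W c j)) * fv c)))\<^sup>2 = (cmod (\<Sum>c\<in>C. (p c * cnj (W c j)) * fv c))\<^sup>2"
      using assms by (simp add: norm_mult)
    also have "\<dots> \<le> real (card C) * (\<Sum>c\<in>C. (cmod (fv c))\<^sup>2)"
      using p_le1 ppos by (intro cs_bound1) (auto simp: norm_mult abs_le_iff less_imp_le)
    finally show "(cmod (e j * (\<Sum>c\<in>C. (p c * cnj (W c j)) * fv c)))\<^sup>2 \<le> real m * (\<Sum>c\<in>C. (cmod (fv c))\<^sup>2)"
      unfolding m_def .
  qed
  also have "\<dots> = real m * real m * (\<Sum>c\<in>C. (cmod (fv c))\<^sup>2)" by simp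
  also have "\<dots> \<le> real m * real m * ((1 / pmin) * (\<Sum>c\<in>C. p c * (cmod (fv c))\<^sup>2))"
    by (intro mult_left_mono weighted) auto
  finally show ?thesis by simp
qed

lemma pw_recover:
  fixes fv :: "nat \<Rightarrow> complex" and e :: "nat \<Rightarrow> complex"
  assumes "\<And>j. cnj (e j) * e j = 1" "d \<in> C"
  shows "(\<Sum>j<m. cnj (V j d) * e j * (cnj (e j) * (\<Sum>c\<in>C. (p c * cnj (W c j)) * fv c))) = p d * fv d"
proof -
  have "(\<Sum>j<m. cnj (V j d) * e j * (cnj (e j) * (\<Sum>c\<in>C. (p c * cnj (W c j)) * fv c)))
      = (\<Sum>j<m. \<Sum>c\<in>C. cnj (V j d) * cnj (W c j) * (p c * fv c))"
  proof (rule sum.cong[OF refl])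
    fix j
    have "cnj (V j d) * e j * (cnj (e j) * (\<Sum>c\<in>C. (p c * cnj (W c j)) * fv c))
        = cnj (V j d) * (cnj (e j) * e j) * (\<Sum>c\<in>C. (p c * cnj (W c j)) * fv c)" by (simp add: ac_simps)
    also have "\<dots> = (\<Sum>c\<in>C. cnj (V j d) * cnj (W c j) * (p c * fv c))"
      using assms(1) by (simp add: sum_distrib_left ac_simps)
    finally show "cnj (V j d) * e j * (cnj (e j) * (\<Sum>c\<in>C. (p c * cnj (W c j)) * fv c)) = (\<Sum>c\<in>C. cnj (V j d) * cnj (W c j) * (p c * fv c))" .
  qed
  also have "\<dots> = (\<Sum>c\<in>C. cnj (\<Sum>j<m. W c j * V j d) * (p c * fv c))"
    by (subst sum.swap) (simp add: sum_distrib_left sum_distrib_right ac_simps)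
  also have "\<dots> = (\<Sum>c\<in>C. (if c = d then 1 else 0) * (p c * fv c))"
    by (intro sum.cong refl) (simp add: V1 assms(2))
  also have "\<dots> = (\<Sum>c\<in>C. if c = d then p c * fv c else 0)" by (intro sum.cong) auto
  also have "\<dots> = p d * fv d" using fC assms(2) by simp
  finally show ?thesis .
qed

lemma pw_lower:
  fixes fv :: "nat \<Rightarrow> complex" and e :: "nat \<Rightarrow> complex"
  assumes "\<And>j. cnj (e j) * e j = 1" "\<And>j. cmod (e j) = 1"
  shows "(\<Sum>c\<in>C. p c * (cmod (fv c))\<^sup>2)
     \<le> (real m * KV2 / pmin) * (\<Sum>j<m. (cmod (cnj (e j) * (\<Sum>c\<in>C. (p c * cnj (W c j)) * fv c)))\<^sup>2)"
proof -
  define G where "G = (\<Sum>j<m. (cmod (cnj (e j) * (\<Sum>c\<in>C. (p c * cnj (W c j)) * fv c)))\<^sup>2)"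
  have G0: "G \<ge> 0" unfolding G_def by (intro sum_nonneg) auto
  have "(\<Sum>c\<in>C. p c * (cmod (fv c))\<^sup>2) \<le> (\<Sum>c\<in>C. KV2 / pmin * G)"
  proof (rule sum_mono)
    fix d assume d: "d \<in> C"
    have eq: "p d * fv d = (\<Sum>j<m. (cnj (V j d) * e j) * (cnj (e j) * (\<Sum>c\<in>C. (p c * cnj (W c j)) * fv c)))"
      using pw_recover[OF assms(1) d, where fv=fv] by (simp only:)
    have "(cmod (p d * fv d))\<^sup>2 \<le> (\<Sum>j<m. (cmod (cnj (V j d) * e j))\<^sup>2) * G"
      unfolding G_def eq by (rule cs_bound)
    also have "(\<Sum>j<m. (cmod (cnj (V j d) * e j))\<^sup>2) = (\<Sum>j<m. (cmod (V j d))\<^sup>2)"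
      using assms(2) by (simp add: norm_mult)
    also have "\<dots> * G \<le> KV2 * G" using KV2_ge[OF d] G0 by (rule mult_right_mono)
    finally have A: "(p d)\<^sup>2 * (cmod (fv d))\<^sup>2 \<le> KV2 * G"
      using ppos d by (simp add: norm_mult power_mult_distrib abs_of_pos)
    have "pmin * (p d * (cmod (fv d))\<^sup>2) \<le> p d * (p d * (cmod (fv d))\<^sup>2)"
      using pmin_le[OF d] ppos d by (intro mult_right_mono) auto
    also have "\<dots> \<le> KV2 * G" using A by (simp add: power2_eq_square ac_simps)
    finally show "p d * (cmod (fv d))\<^sup>2 \<le> KV2 / pmin * G"
      using pmin_pos by (simp add: field_simps)
  qed
  also have "\<dots> = (real m * KV2 / pmin) * G" by (simp add: m_def)
  finally show ?thesis unfolding G_def .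
qed

lemma pw_recon:
  fixes fv :: "nat \<Rightarrow> complex" and e :: "nat \<Rightarrow> complex"
  assumes "\<And>j. e j * cnj (e j) = 1" "d \<in> C"
  shows "(\<Sum>j<m. W d j * e j * (cnj (e j) * (\<Sum>c\<in>C. V j c * fv c))) = fv d"
proof -
  have "(\<Sum>j<m. W d j * e j * (cnj (e j) * (\<Sum>c\<in>C. V j c * fv c))) = (\<Sum>j<m. \<Sum>c\<in>C. W d j * V j c * fv c)"
  proof (rule sum.cong[OF refl])
    fix j
    have "W d j * e j * (cnj (e j) * (\<Sum>c\<in>C. V j c * fv c)) = W d j * (e j * cnj (e j)) * (\<Sum>c\<in>C. V j c * fv c)"
      by (simp add: ac_simps)
    also have "\<dots> = (\<Sum>c\<in>C. W d j * V j c * fv c)" using assms(1) by (simp add: sum_distrib_left ac_simps)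
    finally show "W d j * e j * (cnj (e j) * (\<Sum>c\<in>C. V j c * fv c)) = (\<Sum>c\<in>C. W d j * V j c * fv c)" .
  qed
  also have "\<dots> = (\<Sum>c\<in>C. (\<Sum>j<m. W d j * V j c) * fv c)"
    by (subst sum.swap) (simp add: sum_distrib_right)
  also have "\<dots> = (\<Sum>c\<in>C. if c = d then fv c else 0)" by (intro sum.cong) (auto simp: V1 assms(2))
  also have "\<dots> = fv d" using fC assms(2) by simp
  finally show ?thesis .
qed

lemma pw_err1:
  fixes u :: "nat \<Rightarrow> complex" and e :: "nat \<Rightarrow> complex"
  assumes "\<And>j. cmod (e j) = 1"
  shows "(cmod (\<Sum>j<m. W d j * e j * u j))\<^sup>2 \<le> real m * (\<Sum>j<m. (cmod (u j))\<^sup>2)"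
proof -
  have "(cmod (\<Sum>j<m. (W d j * e j) * u j))\<^sup>2 \<le> real (card {..<m}) * (\<Sum>j<m. (cmod (u j))\<^sup>2)"
    using assms by (intro cs_bound1) (simp add: norm_mult)
  thus ?thesis by simp
qed

lemma pw_inv:
  fixes u :: "nat \<Rightarrow> complex" and e :: "nat \<Rightarrow> complex"
  assumes "\<And>j. cnj (e j) * e j = 1" "j < m"
  shows "cnj (e j) * (\<Sum>c\<in>C. V j c * (\<Sum>k<m. W c k * e k * u k)) = u j"
proof -
  have "(\<Sum>c\<in>C. V j c * (\<Sum>k<m. W c k * e k * u k)) = (\<Sum>k<m. (\<Sum>c\<in>C. V j c * W c k) * (e k * u k))"
    by (simp add: sum_distrib_left sum_distrib_right ac_simps) (rule sum.swap)
  also have "\<dots> = (\<Sum>k<m. if k = j then e k * u k else 0)"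
    by (intro sum.cong) (auto simp: V2 assms(2))
  also have "\<dots> = e j * u j" using assms(2) by simp
  finally show ?thesis using assms(1)[of j] by (simp add: mult.assoc[symmetric])
qed

lemma pw_err2:
  fixes ev :: "nat \<Rightarrow> complex" and e :: "nat \<Rightarrow> complex"
  assumes "\<And>j. cmod (e j) = 1" "j < m"
  shows "(cmod (cnj (e j) * (\<Sum>c\<in>C. V j c * ev c)))\<^sup>2 \<le> (KV2 / pmin) * (\<Sum>c\<in>C. p c * (cmod (ev c))\<^sup>2)"
proof -
  have "(cmod (cnj (e j) * (\<Sum>c\<in>C. V j c * ev c)))\<^sup>2 = (cmod (\<Sum>c\<in>C. V j c * ev c))\<^sup>2"
    using assms by (simp add: norm_mult)
  also have "\<dots> \<le> (\<Sum>c\<in>C. (cmod (V j c))\<^sup>2) * (\<Sum>c\<in>C. (cmod (ev c))\<^sup>2)" by (rule cs_bound)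
  also have "\<dots> \<le> KV2 * ((1 / pmin) * (\<Sum>c\<in>C. p c * (cmod (ev c))\<^sup>2))"
    using KV2_ge'[OF assms(2)] KV2_nonneg weighted
    by (intro mult_mono) (auto intro: sum_nonneg)
  finally show ?thesis by simp
qed

end



context setting2
begin

lemma fin_eta: "finite_measure (eta C p q)"
  unfolding eta_eq[OF fC]
  by (intro finite_measure.finite_measure_distr finite_measure_Dm fC) (simp add: Dm_def)

lemma fin_mu: "finite_measure \<mu>"
  by (rule convolution_finite[OF fin_eta fN sN]) (simp add: eta_eq[OF fC])

lemma L2_mu_meas: "L2 \<mu> f \<Longrightarrow> f \<in> borel_measurable borel"
  unfolding L2_def by simp

lemma L2_shift:
  assumes "L2 \<mu> f" "c \<in> C"
  shows "L2 \<nu> (\<lambda>x. f (x + real q * real c))"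
proof -
  have [measurable]: "f \<in> borel_measurable borel" using assms L2_mu_meas by blast
  have "integrable \<mu> (\<lambda>x. (cmod (f x))\<^sup>2)" using assms(1) by (rule L2_int)
  moreover have "(\<lambda>x. (cmod (f x))\<^sup>2) \<in> borel_measurable borel" by measurable
  ultimately have "integrable \<nu> (\<lambda>x. (cmod (f (x + real q * real c)))\<^sup>2)"
    using assms(2) integrable_mu_iff by blast
  moreover have "(\<lambda>x. f (x + real q * real c)) \<in> borel_measurable \<nu>" by (rule shift_meas) measurable
  ultimately show ?thesis unfolding L2_def by blast
qed

lemma L2_expo_gen:
  assumes "finite_measure M" "sets M = sets borel"
  shows "L2 M (expo l)"
proof -
  have "expo l \<in> borel_measurable M"
    unfolding measurable_cong_sets[OF assms(2) refl] by (rule expo_meas)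
  hence "L2 M (\<lambda>x. expo l x * 1)" by (rule L2_mult[OF L2_const[OF assms(1)], where K=1]) simp
  thus ?thesis by simp
qed

definition "Q f x = (\<Sum>c\<in>C. p c * (cmod (f (x + real q * real c)))\<^sup>2)"

lemma L2norm2_mu:
  assumes "L2 \<mu> f"
  shows "integrable \<nu> (Q f)" "L2norm2 \<mu> f = integral\<^sup>L \<nu> (Q f)"
proof -
  have i: "integrable \<nu> (\<lambda>x. (cmod (f (x + real q * real c)))\<^sup>2)" if "c \<in> C" for c
    using L2_shift[OF assms that] by (rule L2_int)
  show "integrable \<nu> (Q f)" unfolding Q_def using i by (auto intro!: Bochner_Integration.integrable_sum integrable_mult_right)
  have "L2norm2 \<mu> f = (\<Sum>c\<in>C. p c * integral\<^sup>L \<nu> (\<lambda>x. (cmod (f (x + real q * real c)))\<^sup>2))"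
    unfolding L2norm2_def by (rule integral_mu_real[OF L2_int[OF assms]])
  also have "\<dots> = integral\<^sup>L \<nu> (Q f)"
    unfolding Q_def using i by (subst Bochner_Integration.integral_sum) auto
  finally show "L2norm2 \<mu> f = integral\<^sup>L \<nu> (Q f)" .
qed

definition "gg f j x = cnj (expo (t j) x) * (\<Sum>c\<in>C. (p c * cnj (W c j)) * f (x + real q * real c))"
definition "hh f j x = cnj (expo (t j) x) * (\<Sum>c\<in>C. V j c * f (x + real q * real c))"
definition "SS a G j x = (\<Sum>\<gamma>\<in>slice G j. a (\<gamma> + t j) * expo \<gamma> x)"
definition "PS a G y = (\<Sum>l\<in>G. a l * expo l y)"

lemma cnj_expo_meas[measurable]: "(\<lambda>x. cnj (expo l x)) \<in> borel_measurable borel"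
  unfolding expo_def by (intro borel_measurable_continuous_onI continuous_intros)

lemma L2_comb:
  assumes "L2 \<mu> f"
  shows "L2 \<nu> (\<lambda>x. cnj (expo (t j) x) * (\<Sum>c\<in>C. a c * f (x + real q * real c)))"
proof -
  have "L2 \<nu> (\<lambda>x. \<Sum>c\<in>C. a c * f (x + real q * real c))"
  proof (rule L2_sum[OF fC])
    fix c assume c: "c \<in> C"
    show "L2 \<nu> (\<lambda>x. a c * f (x + real q * real c))"
      by (rule L2_mult[OF L2_shift[OF assms c], where K="cmod (a c)"]) (rule measurable_const, simp_all)
  qed
  moreover have "(\<lambda>x. cnj (expo (t j) x)) \<in> borel_measurable \<nu>"
    unfolding measurable_cong_sets[OF sN refl] by (rule cnj_expo_meas)
  ultimately show ?thesis by (rule L2_mult[where K=1]) simp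
qed

lemma L2_gg: "L2 \<mu> f \<Longrightarrow> L2 \<nu> (gg f j)"
  unfolding gg_def by (rule L2_comb)
lemma L2_hh: "L2 \<mu> f \<Longrightarrow> L2 \<nu> (hh f j)"
  unfolding hh_def by (rule L2_comb)

lemma L2_SS: assumes "finite G" shows "L2 \<nu> (SS a G j)"
  unfolding SS_def
proof (rule L2_sum[OF finite_slice[OF assms]])
  fix g assume "g \<in> slice G j"
  show "L2 \<nu> (\<lambda>x. a (g + t j) * expo g x)"
    by (rule L2_mult[OF L2_expo_gen[OF fN sN], where K="cmod (a (g + t j))"]) (rule measurable_const, simp_all)
qed
lemma L2_PS: assumes "finite G" shows "L2 \<mu> (PS a G)"
  unfolding PS_def
proof (rule L2_sum[OF assms])
  fix l assume "l \<in> G"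
  show "L2 \<mu> (\<lambda>x. a l * expo l x)"
    by (rule L2_mult[OF L2_expo_gen[OF fin_mu sets_mu], where K="cmod (a l)"]) (rule measurable_const, simp_all)
qed

lemma L2_diff: "L2 M f \<Longrightarrow> L2 M g \<Longrightarrow> L2 M (\<lambda>x. f x - g x)"
proof -
  assume "L2 M f" "L2 M g"
  have "L2 M (\<lambda>x. (-1) * g x)" by (rule L2_mult[OF \<open>L2 M g\<close>, where K=1]) auto
  hence "L2 M (\<lambda>x. f x + (-1) * g x)" using \<open>L2 M f\<close> by (intro L2_add)
  moreover have eq: "(\<lambda>x. f x + (-1) * g x) = (\<lambda>x. f x - g x)" by auto
  ultimately show ?thesis by (simp only: eq)
qed

end



context setting2
begin

lemma meas_nu: "g \<in> borel_measurable borel \<Longrightarrow> g \<in> borel_measurable \<nu>"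
  unfolding measurable_cong_sets[OF sN refl] .
lemma meas_mu: "g \<in> borel_measurable borel \<Longrightarrow> g \<in> borel_measurable \<mu>"
  unfolding measurable_cong_sets[OF sets_mu refl] .

lemma fcoeff_mu:
  assumes f: "L2 \<mu> f" and g: "\<gamma> \<in> \<Gamma>"
  shows "fcoeff \<mu> f (\<gamma> + t j) = fcoeff \<nu> (gg f j) \<gamma>"
proof -
  define I where "I c x = f (x + real q * real c) * (cnj (expo (t j) x) * cnj (expo \<gamma> x))" for c x
  have mb: "(\<lambda>x. cnj (expo (t j) x) * cnj (expo \<gamma> x)) \<in> borel_measurable borel"
    by (intro borel_measurable_times cnj_expo_meas)
  have intI: "integrable \<nu> (I c)" if c: "c \<in> C" for c
    unfolding I_def
    by (rule L2_integrable[OF fN L2_shift[OF f c] meas_nu[OF mb]]) (simp add: norm_mult)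
  have int_mu: "integrable \<mu> (\<lambda>x. f x * cnj (expo (\<gamma> + t j) x))"
    by (rule L2_integrable[OF fin_mu f meas_mu[OF cnj_expo_meas]]) simp
  have "fcoeff \<mu> f (\<gamma> + t j) = (\<Sum>c\<in>C. p c * integral\<^sup>L \<nu> (\<lambda>x. f (x + real q * real c) * cnj (expo (\<gamma> + t j) (x + real q * real c))))"
    unfolding fcoeff_def by (rule integral_mu[OF int_mu])
  also have "\<dots> = (\<Sum>c\<in>C. p c * (cnj (W c j) * integral\<^sup>L \<nu> (I c)))"
  proof (rule sum.cong[OF refl])
    fix c assume c: "c \<in> C"
    have "(\<lambda>x. f (x + real q * real c) * cnj (expo (\<gamma> + t j) (x + real q * real c))) = (\<lambda>x. cnj (W c j) * I c x)"
      unfolding I_def shift_expo[OF g] by (simp add: ac_simps)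
    thus "p c * integral\<^sup>L \<nu> (\<lambda>x. f (x + real q * real c) * cnj (expo (\<gamma> + t j) (x + real q * real c))) = p c * (cnj (W c j) * integral\<^sup>L \<nu> (I c))"
      by simp
  qed
  also have "\<dots> = integral\<^sup>L \<nu> (\<lambda>x. \<Sum>c\<in>C. (p c * cnj (W c j)) * I c x)"
    using intI by (subst Bochner_Integration.integral_sum) (auto simp: ac_simps)
  also have "\<dots> = fcoeff \<nu> (gg f j) \<gamma>"
    unfolding fcoeff_def gg_def I_def
    by (intro Bochner_Integration.integral_cong refl) (simp add: sum_distrib_left sum_distrib_right ac_simps)
  finally show ?thesis .
qed

lemma frame_bounds:
  assumes f: "L2 \<mu> f"
  shows "(\<Sum>j<m. L2norm2 \<nu> (gg f j)) \<le> (real m * real m / pmin) * L2norm2 \<mu> f"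
    and "L2norm2 \<mu> f \<le> (real m * KV2 / pmin) * (\<Sum>j<m. L2norm2 \<nu> (gg f j))"
proof -
  have ig: "integrable \<nu> (\<lambda>x. (cmod (gg f j x))\<^sup>2)" for j by (rule L2_int[OF L2_gg[OF f]])
  have S: "(\<Sum>j<m. L2norm2 \<nu> (gg f j)) = integral\<^sup>L \<nu> (\<lambda>x. \<Sum>j<m. (cmod (gg f j x))\<^sup>2)"
    unfolding L2norm2_def using ig by (subst Bochner_Integration.integral_sum) auto
  have iS: "integrable \<nu> (\<lambda>x. \<Sum>j<m. (cmod (gg f j x))\<^sup>2)"
    using ig by (auto intro!: Bochner_Integration.integrable_sum)
  note Qf = L2norm2_mu[OF f]
  have "integral\<^sup>L \<nu> (\<lambda>x. \<Sum>j<m. (cmod (gg f j x))\<^sup>2) \<le> integral\<^sup>L \<nu> (\<lambda>x. (real m * real m / pmin) * Q f x)"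
  proof (rule integral_mono[OF iS])
    show "integrable \<nu> (\<lambda>x. (real m * real m / pmin) * Q f x)" using Qf(1) by simp
    fix x
    show "(\<Sum>j<m. (cmod (gg f j x))\<^sup>2) \<le> (real m * real m / pmin) * Q f x"
      unfolding gg_def Q_def by (rule pw_upper) simp
  qed
  thus "(\<Sum>j<m. L2norm2 \<nu> (gg f j)) \<le> (real m * real m / pmin) * L2norm2 \<mu> f"
    unfolding S Qf(2) by simp
  have "integral\<^sup>L \<nu> (Q f) \<le> integral\<^sup>L \<nu> (\<lambda>x. (real m * KV2 / pmin) * (\<Sum>j<m. (cmod (gg f j x))\<^sup>2))"
  proof (rule integral_mono[OF Qf(1)])
    show "integrable \<nu> (\<lambda>x. (real m * KV2 / pmin) * (\<Sum>j<m. (cmod (gg f j x))\<^sup>2))" using iS by simp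
    fix x
    show "Q f x \<le> (real m * KV2 / pmin) * (\<Sum>j<m. (cmod (gg f j x))\<^sup>2)"
      unfolding gg_def Q_def by (rule pw_lower[where e="\<lambda>j. expo (t j) x"]) simp_all
  qed
  thus "L2norm2 \<mu> f \<le> (real m * KV2 / pmin) * (\<Sum>j<m. L2norm2 \<nu> (gg f j))"
    unfolding S Qf(2) by simp
qed

lemma recon:
  assumes "c \<in> C"
  shows "f (x + real q * real c) = (\<Sum>j<m. W c j * expo (t j) x * hh f j x)"
  unfolding hh_def using pw_recon[where e="\<lambda>j. expo (t j) x" and fv="\<lambda>c. f (x + real q * real c)", OF _ assms]
  by simp

lemma PS_shift:
  assumes "finite G" "G \<subseteq> Lam"
  shows "PS a G (x + real q * real c) = (\<Sum>j<m. W c j * expo (t j) x * SS a G j x)"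
proof -
  have "PS a G (x + real q * real c) = (\<Sum>j<m. \<Sum>\<gamma>\<in>slice G j. a (\<gamma> + t j) * expo (\<gamma> + t j) (x + real q * real c))"
    unfolding PS_def by (rule sum_slices[OF assms])
  also have "\<dots> = (\<Sum>j<m. W c j * expo (t j) x * SS a G j x)"
    unfolding SS_def
  proof (rule sum.cong[OF refl])
    fix j
    have "(\<Sum>\<gamma>\<in>slice G j. a (\<gamma> + t j) * expo (\<gamma> + t j) (x + real q * real c))
        = (\<Sum>\<gamma>\<in>slice G j. W c j * expo (t j) x * (a (\<gamma> + t j) * expo \<gamma> x))"
    proof (rule sum.cong[OF refl])
      fix g assume "g \<in> slice G j"
      hence g: "g \<in> \<Gamma>" unfolding slice_def by auto
      show "a (g + t j) * expo (g + t j) (x + real q * real c) = W c j * expo (t j) x * (a (g + t j) * expo g x)"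
        unfolding shift_expo[OF g] by (simp add: ac_simps)
    qed
    thus "(\<Sum>\<gamma>\<in>slice G j. a (\<gamma> + t j) * expo (\<gamma> + t j) (x + real q * real c))
        = W c j * expo (t j) x * (\<Sum>\<gamma>\<in>slice G j. a (\<gamma> + t j) * expo \<gamma> x)"
      by (simp add: sum_distrib_left)
  qed
  finally show ?thesis .
qed

lemma err_shift:
  assumes "finite G" "G \<subseteq> Lam" "c \<in> C"
  shows "f (x + real q * real c) - PS a G (x + real q * real c)
       = (\<Sum>j<m. W c j * expo (t j) x * (hh f j x - SS a G j x))"
  unfolding recon[OF assms(3), of f x] PS_shift[OF assms(1,2)]
  by (simp add: sum_subtractf[symmetric] right_diff_distrib)

lemma E3:
  assumes f: "L2 \<mu> f" and G: "finite G" "G \<subseteq> Lam"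
  shows "L2norm2 \<mu> (\<lambda>y. f y - PS a G y) \<le> real m * (\<Sum>j<m. L2norm2 \<nu> (\<lambda>x. hh f j x - SS a G j x))"
proof -
  have L: "L2 \<mu> (\<lambda>y. f y - PS a G y)" by (rule L2_diff[OF f L2_PS[OF G(1)]])
  note Qe = L2norm2_mu[OF L]
  have iu: "integrable \<nu> (\<lambda>x. (cmod (hh f j x - SS a G j x))\<^sup>2)" for j
    by (rule L2_int[OF L2_diff[OF L2_hh[OF f] L2_SS[OF G(1)]]])
  have iS: "integrable \<nu> (\<lambda>x. real m * (\<Sum>j<m. (cmod (hh f j x - SS a G j x))\<^sup>2))"
    using iu by (auto intro!: Bochner_Integration.integrable_sum)
  have "integral\<^sup>L \<nu> (Q (\<lambda>y. f y - PS a G y)) \<le> integral\<^sup>L \<nu> (\<lambda>x. real m * (\<Sum>j<m. (cmod (hh f j x - SS a G j x))\<^sup>2))"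
  proof (rule integral_mono[OF Qe(1) iS])
    fix x
    have "Q (\<lambda>y. f y - PS a G y) x \<le> (\<Sum>c\<in>C. p c * (real m * (\<Sum>j<m. (cmod (hh f j x - SS a G j x))\<^sup>2)))"
      unfolding Q_def
    proof (rule sum_mono)
      fix c assume c: "c \<in> C"
      show "p c * (cmod (f (x + real q * real c) - PS a G (x + real q * real c)))\<^sup>2
          \<le> p c * (real m * (\<Sum>j<m. (cmod (hh f j x - SS a G j x))\<^sup>2))"
        unfolding err_shift[OF G c] using ppos c
        by (intro mult_left_mono pw_err1) auto
    qed
    also have "\<dots> = real m * (\<Sum>j<m. (cmod (hh f j x - SS a G j x))\<^sup>2)"
      by (simp add: sum_distrib_right[symmetric] psum)
    finally show "Q (\<lambda>y. f y - PS a G y) x \<le> real m * (\<Sum>j<m. (cmod (hh f j x - SS a G j x))\<^sup>2)" .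
  qed
  also have "\<dots> = real m * (\<Sum>j<m. L2norm2 \<nu> (\<lambda>x. hh f j x - SS a G j x))"
    unfolding L2norm2_def using iu by (simp add: Bochner_Integration.integral_sum)
  finally show ?thesis unfolding Qe(2) .
qed

lemma E4:
  assumes f: "L2 \<mu> f" and G: "finite G" "G \<subseteq> Lam" and j: "j < m"
  shows "L2norm2 \<nu> (\<lambda>x. hh f j x - SS a G j x) \<le> (KV2 / pmin) * L2norm2 \<mu> (\<lambda>y. f y - PS a G y)"
proof -
  have L: "L2 \<mu> (\<lambda>y. f y - PS a G y)" by (rule L2_diff[OF f L2_PS[OF G(1)]])
  note Qe = L2norm2_mu[OF L]
  have iu: "integrable \<nu> (\<lambda>x. (cmod (hh f j x - SS a G j x))\<^sup>2)"
    by (rule L2_int[OF L2_diff[OF L2_hh[OF f] L2_SS[OF G(1)]]])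
  have "integral\<^sup>L \<nu> (\<lambda>x. (cmod (hh f j x - SS a G j x))\<^sup>2) \<le> integral\<^sup>L \<nu> (\<lambda>x. (KV2 / pmin) * Q (\<lambda>y. f y - PS a G y) x)"
  proof (rule integral_mono[OF iu])
    show "integrable \<nu> (\<lambda>x. (KV2 / pmin) * Q (\<lambda>y. f y - PS a G y) x)" using Qe(1) by simp
    fix x
    have "hh f j x - SS a G j x = cnj (expo (t j) x) * (\<Sum>c\<in>C. V j c * (f (x + real q * real c) - PS a G (x + real q * real c)))"
    proof -
      have "(\<Sum>c\<in>C. V j c * (f (x + real q * real c) - PS a G (x + real q * real c)))
          = (\<Sum>c\<in>C. V j c * (\<Sum>k<m. W c k * expo (t k) x * (hh f k x - SS a G k x)))"
        by (rule sum.cong) (simp_all add: err_shift[OF G])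
      moreover have "cnj (expo (t j) x) * (\<Sum>c\<in>C. V j c * (\<Sum>k<m. W c k * expo (t k) x * (hh f k x - SS a G k x)))
          = hh f j x - SS a G j x"
        by (rule pw_inv[where e="\<lambda>j. expo (t j) x" and u="\<lambda>k. hh f k x - SS a G k x", OF _ j]) simp
      ultimately show ?thesis by simp
    qed
    thus "(cmod (hh f j x - SS a G j x))\<^sup>2 \<le> (KV2 / pmin) * Q (\<lambda>y. f y - PS a G y) x"
      unfolding Q_def by (simp only:) (rule pw_err2[OF _ j], simp)
  qed
  thus ?thesis unfolding Qe(2) by (simp add: L2norm2_def)
qed

end



context setting2
begin

lemma frame_nu: "\<exists>A B. A > 0 \<and> B > 0 \<and> (\<forall>f. L2 \<nu> f \<longrightarrow>
      (\<lambda>l. (cmod (fcoeff \<nu> f l))\<^sup>2) summable_on \<Gamma> \<and>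
      A * L2norm2 \<nu> f \<le> (\<Sum>\<^sub>\<infinity>l\<in>\<Gamma>. (cmod (fcoeff \<nu> f l))\<^sup>2) \<and>
      (\<Sum>\<^sub>\<infinity>l\<in>\<Gamma>. (cmod (fcoeff \<nu> f l))\<^sup>2) \<le> B * L2norm2 \<nu> f)"
  using RS unfolding R_spectrum_def exp_frame_def by blast

lemma KV2_pmin_nonneg: "KV2 / pmin \<ge> 0" using KV2_nonneg pmin_pos by simp

lemma frame_mu: "exp_frame \<mu> Lam"
proof -
  obtain A B where AB0: "A > 0" "B > 0" "\<forall>f. L2 \<nu> f \<longrightarrow>
      (\<lambda>l. (cmod (fcoeff \<nu> f l))\<^sup>2) summable_on \<Gamma> \<and>
      A * L2norm2 \<nu> f \<le> (\<Sum>\<^sub>\<infinity>l\<in>\<Gamma>. (cmod (fcoeff \<nu> f l))\<^sup>2) \<and>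
      (\<Sum>\<^sub>\<infinity>l\<in>\<Gamma>. (cmod (fcoeff \<nu> f l))\<^sup>2) \<le> B * L2norm2 \<nu> f"
    using frame_nu by blast
  note AB = AB0(1,2) AB0(3)[rule_format]
  define K1 where "K1 = real m * real m / pmin"
  define K2 where "K2 = real m * KV2 / pmin"
  have K1: "K1 > 0" unfolding K1_def using m_pos pmin_pos by simp
  have K2: "K2 \<ge> 0" unfolding K2_def using KV2_nonneg pmin_pos by simp
  show ?thesis unfolding exp_frame_def
  proof (intro exI conjI allI impI)
    show "A / (K2 + 1) > 0" using AB K2 by simp
    show "B * K1 > 0" using AB K1 by simp
    fix f assume f: "L2 \<mu> f"
    define s where "s j = (\<Sum>\<^sub>\<infinity>l\<in>\<Gamma>. (cmod (fcoeff \<nu> (gg f j) l))\<^sup>2)" for j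
    define n where "n j = L2norm2 \<nu> (gg f j)" for j
    have hs: "((\<lambda>\<gamma>. (cmod (fcoeff \<mu> f (\<gamma> + t j)))\<^sup>2) has_sum s j) \<Gamma>" for j
    proof -
      have "((\<lambda>\<gamma>. (cmod (fcoeff \<nu> (gg f j) \<gamma>))\<^sup>2) has_sum s j) \<Gamma>"
        unfolding s_def using AB(3)[OF L2_gg[OF f]] by (simp add: has_sum_infsum)
      thus ?thesis by (rule has_sum_cong[THEN iffD2, rotated]) (simp add: fcoeff_mu[OF f])
    qed
    have tot: "((\<lambda>l. (cmod (fcoeff \<mu> f l))\<^sup>2) has_sum (\<Sum>j<m. s j)) Lam"
      by (rule has_sum_Lam) (rule hs)
    show "(\<lambda>l. (cmod (fcoeff \<mu> f l))\<^sup>2) summable_on Lam" using tot by (rule has_sum_imp_summable)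
    have I: "(\<Sum>\<^sub>\<infinity>l\<in>Lam. (cmod (fcoeff \<mu> f l))\<^sup>2) = (\<Sum>j<m. s j)" using tot by (rule infsumI)
    have lo: "A * n j \<le> s j" and up: "s j \<le> B * n j" for j
      unfolding s_def n_def using AB(3)[OF L2_gg[OF f]] by auto
    have n0: "n j \<ge> 0" for j unfolding n_def by (rule L2norm2_nonneg)
    have fb1: "(\<Sum>j<m. n j) \<le> K1 * L2norm2 \<mu> f" unfolding n_def K1_def by (rule frame_bounds(1)[OF f])
    have fb2: "L2norm2 \<mu> f \<le> K2 * (\<Sum>j<m. n j)" unfolding n_def K2_def by (rule frame_bounds(2)[OF f])
    have sn: "A * (\<Sum>j<m. n j) \<le> (\<Sum>j<m. s j)" using lo by (simp add: sum_distrib_left sum_mono)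
    have sn2: "(\<Sum>j<m. s j) \<le> B * (\<Sum>j<m. n j)" using up by (simp add: sum_distrib_left sum_mono)
    have N0: "(\<Sum>j<m. n j) \<ge> 0" using n0 by (simp add: sum_nonneg)
    have "A / (K2 + 1) * L2norm2 \<mu> f \<le> A / (K2 + 1) * (K2 * (\<Sum>j<m. n j))"
      using fb2 AB K2 by (intro mult_left_mono) auto
    also have "\<dots> \<le> A * (\<Sum>j<m. n j)"
    proof -
      have "K2 / (K2 + 1) \<le> 1" using K2 by simp
      hence "K2 / (K2 + 1) * (A * (\<Sum>j<m. n j)) \<le> 1 * (A * (\<Sum>j<m. n j))"
        using AB N0 by (intro mult_right_mono) auto
      thus ?thesis by (simp add: field_simps)
    qed
    also have "\<dots> \<le> (\<Sum>j<m. s j)" by (rule sn)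
    finally show "A / (K2 + 1) * L2norm2 \<mu> f \<le> (\<Sum>\<^sub>\<infinity>l\<in>Lam. (cmod (fcoeff \<mu> f l))\<^sup>2)" unfolding I .
    have "(\<Sum>j<m. s j) \<le> B * (\<Sum>j<m. n j)" by (rule sn2)
    also have "\<dots> \<le> B * (K1 * L2norm2 \<mu> f)" using fb1 AB by (intro mult_left_mono) auto
    finally show "(\<Sum>\<^sub>\<infinity>l\<in>Lam. (cmod (fcoeff \<mu> f l))\<^sup>2) \<le> B * K1 * L2norm2 \<mu> f" unfolding I by simp
  qed
qed

end



context setting2
begin

lemma basis_nu: "exp_basis \<nu> \<Gamma>" using RS unfolding R_spectrum_def by blast

lemma slice_sub: "slice G j \<subseteq> \<Gamma>" unfolding slice_def by auto

lemma transfer: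
  assumes f: "L2 \<mu> f" and cv: "exp_series_conv \<mu> Lam c f" and j: "j < m"
  shows "exp_series_conv \<nu> \<Gamma> (\<lambda>\<gamma>. c (\<gamma> + t j)) (hh f j)"
  unfolding exp_series_conv_def
proof (intro allI impI)
  fix e :: real assume e: "e > 0"
  define K3 where "K3 = KV2 / pmin"
  have K3: "K3 \<ge> 0" unfolding K3_def by (rule KV2_pmin_nonneg)
  have e'': "e / (K3 + 1) > 0" using e K3 by (intro divide_pos_pos) auto
  obtain F0 where F0: "finite F0" "F0 \<subseteq> Lam"
    and H0: "\<forall>G. finite G \<and> F0 \<subseteq> G \<and> G \<subseteq> Lam \<longrightarrow>
        L2norm2 \<mu> (\<lambda>x. f x - (\<Sum>l\<in>G. c l * expo l x)) < e / (K3 + 1)"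
    using cv[unfolded exp_series_conv_def, rule_format, OF e''] by (elim exE conjE)
  have H: "L2norm2 \<mu> (\<lambda>x. f x - (\<Sum>l\<in>G. c l * expo l x)) < e / (K3 + 1)"
    if "finite G" "F0 \<subseteq> G" "G \<subseteq> Lam" for G
    using H0 that by blast
  show "\<exists>F0'. finite F0' \<and> F0' \<subseteq> \<Gamma> \<and> (\<forall>F. finite F \<and> F0' \<subseteq> F \<and> F \<subseteq> \<Gamma> \<longrightarrow>
          L2norm2 \<nu> (\<lambda>x. hh f j x - (\<Sum>\<gamma>\<in>F. c (\<gamma> + t j) * expo \<gamma> x)) < e)"
  proof (intro exI conjI allI impI)
    show "finite (slice F0 j)" using F0(1) by (rule finite_slice)
    show "slice F0 j \<subseteq> \<Gamma>" by (rule slice_sub)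
    fix F assume F: "finite F \<and> slice F0 j \<subseteq> F \<and> F \<subseteq> \<Gamma>"
    define G where "G = F0 \<union> (\<lambda>\<gamma>. \<gamma> + t j) ` F"
    have G: "finite G" "F0 \<subseteq> G" "G \<subseteq> Lam"
      unfolding G_def using F F0 Lam_mem[OF j] by auto
    have sl: "slice G j = F"
    proof
      show "F \<subseteq> slice G j" using F unfolding slice_def G_def by auto
      show "slice G j \<subseteq> F"
      proof
        fix g assume "g \<in> slice G j"
        hence g: "g \<in> \<Gamma>" "g + t j \<in> F0 \<or> g + t j \<in> (\<lambda>\<gamma>. \<gamma> + t j) ` F"
          unfolding slice_def G_def by auto
        show "g \<in> F"
        proof (cases "g + t j \<in> F0")
          case True
          thus ?thesis using g F unfolding slice_def by auto
        next
          case False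
          then obtain g' where "g' \<in> F" "g + t j = g' + t j" using g by auto
          thus ?thesis by simp
        qed
      qed
    qed
    have "L2norm2 \<nu> (\<lambda>x. hh f j x - (\<Sum>\<gamma>\<in>F. c (\<gamma> + t j) * expo \<gamma> x)) = L2norm2 \<nu> (\<lambda>x. hh f j x - SS c G j x)"
      unfolding SS_def sl ..
    also have "\<dots> \<le> K3 * L2norm2 \<mu> (\<lambda>y. f y - PS c G y)"
      unfolding K3_def by (rule E4[OF f G(1,3) j])
    also have "\<dots> \<le> K3 * (e / (K3 + 1))"
      using H[OF G] K3 unfolding PS_def by (intro mult_left_mono) auto
    also have "\<dots> < e" using K3 e by (simp add: field_simps)
    finally show "L2norm2 \<nu> (\<lambda>x. hh f j x - (\<Sum>\<gamma>\<in>F. c (\<gamma> + t j) * expo \<gamma> x)) < e" .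
  qed
qed

definition "jof l = (THE j. j < m \<and> l - t j \<in> \<Gamma>)"

lemma jof: "j < m \<Longrightarrow> \<gamma> \<in> \<Gamma> \<Longrightarrow> jof (\<gamma> + t j) = j"
  unfolding jof_def
proof (rule the_equality)
  assume "j < m" "\<gamma> \<in> \<Gamma>"
  thus "j < m \<and> \<gamma> + t j - t j \<in> \<Gamma>" by simp
  fix j' assume "j' < m \<and> \<gamma> + t j - t j' \<in> \<Gamma>"
  thus "j' = j" using uniq[of \<gamma> "\<gamma> + t j - t j'" j j'] \<open>j < m\<close> \<open>\<gamma> \<in> \<Gamma>\<close> by auto
qed

lemma existence:
  assumes f: "L2 \<mu> f"
  shows "\<exists>c. exp_series_conv \<mu> Lam c f"
proof -
  have "\<forall>j\<in>{..<m}. \<exists>a. exp_series_conv \<nu> \<Gamma> a (hh f j)"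
    using basis_nu[unfolded exp_basis_def, rule_format, OF L2_hh[OF f]] by blast
  from bchoice[OF this] obtain A where A0: "\<forall>j\<in>{..<m}. exp_series_conv \<nu> \<Gamma> (A j) (hh f j)"
    by (elim exE)
  have A: "exp_series_conv \<nu> \<Gamma> (A j) (hh f j)" if "j < m" for j using A0 that by simp
  define cf where "cf l = A (jof l) (l - t (jof l))" for l
  have cf: "cf (\<gamma> + t j) = A j \<gamma>" if "j < m" "\<gamma> \<in> \<Gamma>" for j \<gamma>
    unfolding cf_def jof[OF that] by simp
  show ?thesis
  proof (rule exI[of _ cf], unfold exp_series_conv_def, intro allI impI)
    fix e :: real assume e: "e > 0"
    define e' where "e' = e / (real m * real m)"
    have e': "e' > 0" unfolding e'_def using e m_pos by simp
    have "\<forall>j\<in>{..<m}. \<exists>F0. finite F0 \<and> F0 \<subseteq> \<Gamma> \<and> (\<forall>F. finite F \<and> F0 \<subseteq> F \<and> F \<subseteq> \<Gamma> \<longrightarrow>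
        L2norm2 \<nu> (\<lambda>x. hh f j x - (\<Sum>\<gamma>\<in>F. A j \<gamma> * expo \<gamma> x)) < e')"
    proof
      fix j assume "j \<in> {..<m}"
      hence "exp_series_conv \<nu> \<Gamma> (A j) (hh f j)" using A by simp
      from this[unfolded exp_series_conv_def, rule_format, OF e']
      show "\<exists>F0. finite F0 \<and> F0 \<subseteq> \<Gamma> \<and> (\<forall>F. finite F \<and> F0 \<subseteq> F \<and> F \<subseteq> \<Gamma> \<longrightarrow>
        L2norm2 \<nu> (\<lambda>x. hh f j x - (\<Sum>\<gamma>\<in>F. A j \<gamma> * expo \<gamma> x)) < e')" .
    qed
    from bchoice[OF this] obtain F0 where F00: "\<forall>j\<in>{..<m}. finite (F0 j) \<and> F0 j \<subseteq> \<Gamma> \<and> (\<forall>F. finite F \<and> F0 j \<subseteq> F \<and> F \<subseteq> \<Gamma> \<longrightarrow>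
        L2norm2 \<nu> (\<lambda>x. hh f j x - (\<Sum>\<gamma>\<in>F. A j \<gamma> * expo \<gamma> x)) < e')"
      by (elim exE)
    have F0: "finite (F0 j) \<and> F0 j \<subseteq> \<Gamma> \<and> (\<forall>F. finite F \<and> F0 j \<subseteq> F \<and> F \<subseteq> \<Gamma> \<longrightarrow>
        L2norm2 \<nu> (\<lambda>x. hh f j x - (\<Sum>\<gamma>\<in>F. A j \<gamma> * expo \<gamma> x)) < e')" if "j < m" for j
      using F00 that by simp
    define G0 where "G0 = (\<lambda>(j, \<gamma>). \<gamma> + t j) ` (SIGMA j:{..<m}. F0 j)"
    show "\<exists>F0. finite F0 \<and> F0 \<subseteq> Lam \<and> (\<forall>F. finite F \<and> F0 \<subseteq> F \<and> F \<subseteq> Lam \<longrightarrow>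
        L2norm2 \<mu> (\<lambda>x. f x - (\<Sum>l\<in>F. cf l * expo l x)) < e)"
    proof (intro exI conjI allI impI)
      show "finite G0" unfolding G0_def using F0 by (intro finite_imageI finite_SigmaI) auto
      show "G0 \<subseteq> Lam"
      proof
        fix l assume "l \<in> G0"
        then obtain j g where jg: "j < m" "g \<in> F0 j" "l = g + t j" unfolding G0_def by auto
        hence "g \<in> \<Gamma>" using F0[OF jg(1)] by blast
        thus "l \<in> Lam" using jg Lam_mem by simp
      qed
      fix G assume G: "finite G \<and> G0 \<subseteq> G \<and> G \<subseteq> Lam"
      have each: "L2norm2 \<nu> (\<lambda>x. hh f j x - SS cf G j x) < e'" if j: "j < m" for j
      proof -
        have "SS cf G j = (\<lambda>x. \<Sum>\<gamma>\<in>slice G j. A j \<gamma> * expo \<gamma> x)"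
          unfolding SS_def
        proof (intro ext sum.cong refl)
          fix x g assume "g \<in> slice G j"
          hence "g \<in> \<Gamma>" using slice_sub by blast
          thus "cf (g + t j) * expo g x = A j g * expo g x" using cf[OF j] by simp
        qed
        moreover have "F0 j \<subseteq> slice G j"
          using G F0[OF j] j unfolding slice_def G0_def by force
        ultimately show ?thesis using F0[OF j] finite_slice[of G j] slice_sub[of G j] G by auto
      qed
      have "L2norm2 \<mu> (\<lambda>x. f x - (\<Sum>l\<in>G. cf l * expo l x)) = L2norm2 \<mu> (\<lambda>y. f y - PS cf G y)"
        unfolding PS_def ..
      also have "\<dots> \<le> real m * (\<Sum>j<m. L2norm2 \<nu> (\<lambda>x. hh f j x - SS cf G j x))"
        using G by (intro E3[OF f]) auto
      also have "\<dots> < real m * (\<Sum>j<m. e')"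
        using m_pos each by (intro mult_strict_left_mono sum_strict_mono) auto
      also have "\<dots> = e" unfolding e'_def using m_pos by simp
      finally show "L2norm2 \<mu> (\<lambda>x. f x - (\<Sum>l\<in>G. cf l * expo l x)) < e" .
    qed
  qed
qed

lemma basis_mu: "exp_basis \<mu> Lam"
  unfolding exp_basis_def
proof (intro allI impI)
  fix f assume f: "L2 \<mu> f"
  show "(\<exists>c. exp_series_conv \<mu> Lam c f) \<and> (\<forall>c c'. exp_series_conv \<mu> Lam c f \<longrightarrow> exp_series_conv \<mu> Lam c' f \<longrightarrow> (\<forall>l\<in>Lam. c l = c' l))"
  proof (rule conjI)
  show "\<exists>c. exp_series_conv \<mu> Lam c f" by (rule existence[OF f])
  show "\<forall>c c'. exp_series_conv \<mu> Lam c f \<longrightarrow> exp_series_conv \<mu> Lam c' f \<longrightarrow> (\<forall>l\<in>Lam. c l = c' l)"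
  proof (intro allI impI ballI)
    fix c c' l assume c: "exp_series_conv \<mu> Lam c f" and c': "exp_series_conv \<mu> Lam c' f" and l: "l \<in> Lam"
    then obtain j \<gamma> where j: "j < m" "\<gamma> \<in> \<Gamma>" "l = \<gamma> + t j" unfolding Lam_def by auto
    have "\<forall>a a'. exp_series_conv \<nu> \<Gamma> a (hh f j) \<longrightarrow> exp_series_conv \<nu> \<Gamma> a' (hh f j) \<longrightarrow> (\<forall>g\<in>\<Gamma>. a g = a' g)"
      using basis_nu[unfolded exp_basis_def, rule_format, OF L2_hh[OF f]] by blast
    hence "(\<lambda>\<gamma>. c (\<gamma> + t j)) \<gamma> = (\<lambda>\<gamma>. c' (\<gamma> + t j)) \<gamma>"
      using transfer[OF f c j(1)] transfer[OF f c' j(1)] j(2) by blast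
    thus "c l = c' l" using j(3) by simp
  qed
  qed
qed

lemma main: "R_spectral \<mu>"
  unfolding R_spectral_def R_spectrum_def using basis_mu frame_mu by blast

end

theorem theorem5p2:
  fixes \<nu> :: "real measure" and \<Gamma> :: "real set" and q :: nat
    and C :: "nat set" and p :: "nat \<Rightarrow> real"
  assumes "sets \<nu> = sets borel" and "prob_space \<nu>"
    and "msupport \<nu> \<subseteq> {0..1}"
    and "R_spectrum \<nu> \<Gamma>"
    and "q \<ge> 1" and "\<forall>\<gamma>\<in>\<Gamma>. real q * \<gamma> \<in> \<int>"
    and "finite C" and "\<forall>c\<in>C. p c > 0" and "(\<Sum>c\<in>C. p c) = 1"
  shows "R_spectral (eta C p q \<star> \<nu>)"
proof -
  have S: "setting2 \<nu> C p q \<Gamma>"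
    unfolding setting2_def setting2_axioms_def setting_def
    using assms(1,2,4,5,6,7,8,9) by (intro conjI)
  interpret setting2 \<nu> C p q \<Gamma> by (rule S)
  show ?thesis by (rule main)
qed

end
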